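(* Let $\tau \ge 2$ be an integer and let $(X,\mathcal{B})$ be a $3$-$(v,k,1)$-design with $k \ge \tau(\tau-1)+1$. Let $\sigma = \tau k - \tau(\tau-1)$. Then the union of any $\tau$ distinct blocks contains at least $\sigma$ points and the union of any $\tau-1$ blocks contains at most $\sigma-1$ points; consequently, using a base $(\sigma,v)$-threshold scheme with this distribution design yields an expanded threshold scheme with threshold $\tau$.
   Context: A $t$-$(v,k,\lambda)$-design is a set $X$ of $v$ points together with a collection $\mathcal{B}$ of $k$-subsets of $X$ (blocks) such that every $t$-subset of $X$ lies in exactly $\lambda$ blocks. A distribution design $(X,\mathcal{B})$ with $|X|=m$, $|\mathcal{B}|=n$ combined with a base $(\sigma,m)$-threshold scheme gives each player (one per block) the subshares indexed by the points of its block; if the union of any $\tau$ blocks has at least $\sigma$ points and the union of any $\tau-1$ blocks has at most $\sigma-1$ points, the resulting expanded scheme is a $(\tau,n)$-threshold scheme. *)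

theory Defs
  imports Main
begin

text \<open>Blocks are modelled as a set of sets (for a 3-(v,k,1)-design with k \<ge> 3 blocks
  are necessarily distinct).\<close>
definition t_design :: "nat \<Rightarrow> nat \<Rightarrow> nat \<Rightarrow> nat \<Rightarrow> 'a set \<Rightarrow> 'a set set \<Rightarrow> bool" where
  "t_design t v k lam X B \<longleftrightarrow>
     finite X \<and> card X = v \<and>
     (\<forall>b\<in>B. b \<subseteq> X \<and> card b = k) \<and>
     (\<forall>T. T \<subseteq> X \<and> card T = t \<longrightarrow> card {b\<in>B. T \<subseteq> b} = lam)"

text \<open>Distribution design condition making the expanded scheme (from a base
  (sigma,m)-threshold scheme) a (tau,n)-threshold scheme: the union of any tau
  distinct blocks has at least sigma points, the union of any tau-1 blocks has at
  most sigma-1 points.\<close>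
definition threshold_distribution_design :: "'a set set \<Rightarrow> nat \<Rightarrow> nat \<Rightarrow> bool" where
  "threshold_distribution_design B \<tau> \<sigma> \<longleftrightarrow>
     (\<forall>S. S \<subseteq> B \<and> card S = \<tau> \<longrightarrow> card (\<Union>S) \<ge> \<sigma>) \<and>
     (\<forall>S. S \<subseteq> B \<and> card S = \<tau> - 1 \<longrightarrow> card (\<Union>S) \<le> \<sigma> - 1)"

end

theory Submission
  imports Defs
begin

lemma union_lower:
  assumes "finite S" "\<And>b. b \<in> S \<Longrightarrow> finite b \<and> card b = k"
    and "\<And>b c. b \<in> S \<Longrightarrow> c \<in> S \<Longrightarrow> b \<noteq> c \<Longrightarrow> card (b \<inter> c) \<le> 2"
  shows "card S * k \<le> card (\<Union>S) + card S * (card S - 1)"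
  using assms
proof (induction S rule: finite_induct)
  case empty then show ?case by simp
next
  case (insert b S)
  let ?n = "card S"
  let ?U = "\<Union>S"
  have IH: "?n * k \<le> card ?U + ?n * (?n - 1)"
    using insert by auto
  have fb: "finite b" "card b = k" using insert by auto
  have fU: "finite ?U" using insert by auto
  have eq: "card (b \<union> ?U) + card (b \<inter> ?U) = k + card ?U"
    using card_Un_Int[OF fb(1) fU] fb by simp
  have "b \<inter> ?U = (\<Union>c\<in>S. b \<inter> c)" by auto
  hence "card (b \<inter> ?U) \<le> (\<Sum>c\<in>S. card (b \<inter> c))"
    using card_UN_le[OF insert(1)] by metis
  also have "\<dots> \<le> (\<Sum>c\<in>S. 2)"
  proof (rule sum_mono)
    fix c assume "c \<in> S"
    hence "b \<noteq> c" using insert(2) by auto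
    thus "card (b \<inter> c) \<le> 2" using insert.prems(2)[of b c] \<open>c \<in> S\<close> by simp
  qed
  finally have I: "card (b \<inter> ?U) \<le> 2 * ?n" by (simp add: mult.commute)
  have cs: "card (insert b S) = Suc ?n" using insert by simp
  have "Suc ?n * k = k + ?n * k" by simp
  have sq: "Suc ?n * (Suc ?n - 1) = ?n * (?n - 1) + 2 * ?n"
    by (cases ?n) (auto simp: algebra_simps)
  show ?case unfolding cs sq using IH eq I by simp
qed

theorem mainTheorem6:
  fixes X :: "'a set" and B :: "'a set set" and v k \<tau> \<sigma> :: nat
  assumes "\<tau> \<ge> 2"
    and "t_design 3 v k 1 X B"
    and "k \<ge> \<tau> * (\<tau> - 1) + 1"
    and "\<sigma> = \<tau> * k - \<tau> * (\<tau> - 1)"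
  shows "(\<forall>S. S \<subseteq> B \<and> card S = \<tau> \<longrightarrow> card (\<Union>S) \<ge> \<sigma>) \<and>
         (\<forall>S. S \<subseteq> B \<and> card S = \<tau> - 1 \<longrightarrow> card (\<Union>S) \<le> \<sigma> - 1) \<and>
         threshold_distribution_design B \<tau> \<sigma>"
proof -
  have fX: "finite X" and blk: "\<And>b. b \<in> B \<Longrightarrow> b \<subseteq> X \<and> card b = k"
    and des: "\<And>T. T \<subseteq> X \<Longrightarrow> card T = 3 \<Longrightarrow> card {b\<in>B. T \<subseteq> b} = 1"
    using assms(2) unfolding t_design_def by auto
  have fb: "\<And>b. b \<in> B \<Longrightarrow> finite b" using blk fX finite_subset by blast
  have inter: "card (b \<inter> c) \<le> 2" if "b \<in> B" "c \<in> B" "b \<noteq> c" for b c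
  proof (rule ccontr)
    assume "\<not> ?thesis"
    hence "3 \<le> card (b \<inter> c)" by simp
    then obtain T where T: "T \<subseteq> b \<inter> c" "card T = 3"
      using obtain_subset_with_card_n by metis
    have "T \<subseteq> X" using T blk that by blast
    hence c1: "card {d\<in>B. T \<subseteq> d} = 1" using des T by blast
    have "{b, c} \<subseteq> {d\<in>B. T \<subseteq> d}" using T that by auto
    moreover have "finite {d\<in>B. T \<subseteq> d}" using c1 card.infinite[of "{d\<in>B. T \<subseteq> d}"] by linarith
    ultimately have "card {b, c} \<le> 1" using c1 card_mono by metis
    thus False using that by simp
  qed
  have P1: "\<forall>S. S \<subseteq> B \<and> card S = \<tau> \<longrightarrow> card (\<Union>S) \<ge> \<sigma>"
  proof (intro allI impI)
    fix S assume S: "S \<subseteq> B \<and> card S = \<tau>"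
    hence "finite S" using assms(1) card.infinite[of S] by linarith
    from union_lower[OF this, of k] S fb blk inter
    have "\<tau> * k \<le> card (\<Union>S) + \<tau> * (\<tau> - 1)" by blast
    thus "card (\<Union>S) \<ge> \<sigma>" using assms(4) by simp
  qed
  have P2: "\<forall>S. S \<subseteq> B \<and> card S = \<tau> - 1 \<longrightarrow> card (\<Union>S) \<le> \<sigma> - 1"
  proof (intro allI impI)
    fix S assume S: "S \<subseteq> B \<and> card S = \<tau> - 1"
    hence fS: "finite S" using assms(1) card.infinite[of S] by linarith
    have "card (\<Union>S) \<le> (\<Sum>b\<in>S. card b)" using card_Union_le_sum_card by blast
    also have "\<dots> = (\<tau> - 1) * k" using S blk by (simp add: subset_iff)
    finally have u: "card (\<Union>S) \<le> (\<tau> - 1) * k" .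
    have "(\<tau> - 1) * k + \<tau> * (\<tau> - 1) + 1 \<le> \<tau> * k"
    proof -
      obtain m where m: "\<tau> = Suc m" using assms(1) by (cases \<tau>) auto
      have "m * k + Suc m * m + 1 \<le> Suc m * k" using assms(3) m by simp
      thus ?thesis using m by simp
    qed
    thus "card (\<Union>S) \<le> \<sigma> - 1" using u assms(4) by linarith
  qed
  show ?thesis using P1 P2 unfolding threshold_distribution_design_def by blast
qed

end
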